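(* Let $\mathbb{Q}$ be the rationals and $A,B\subseteq\mathbb{Q}$. The following are equivalent: (i) the crisp context $(A,B,\leq)$ is a reduct of $(\mathbb{Q},\mathbb{Q},\leq)$ in FCA; (ii) the crisp context $(A,B,\not\leq)$ is a reduct of $(\mathbb{Q},\mathbb{Q},\not\leq)$ in RST; (iii) both $A$ and $B$ are dense in $\mathbb{Q}$ (with respect to the usual order topology, i.e. each meets every nonempty open interval of $\mathbb{Q}$).
   Context: Crisp contexts are $L$-contexts for $L=\{0,1\}$ with $*=\wedge$; a context is a triple $(X,Y,R)$ with $R\subseteq X\times Y$, and subsets of $X$ are identified with maps $X\to\{0,1\}$. $(A,B,\le)$ denotes $(A,B,R)$ with $R=\{(a,b)\in A\times B\mid a\le b\}$, and $\not\le$ its complement. For $U\subseteq X$, $V\subseteq Y$: $R^\uparrow U=\{y\mid\forall x\in U,(x,y)\in R\}$, $R^\downarrow V=\{x\mid\forall y\in V,(x,y)\in R\}$, $R^\exists U=\{y\mid\exists x\in U,(x,y)\in R\}$, $R^\forall V=\{x\mid\forall y,(x,y)\in R\Rightarrow y\in V\}$. $\mathcal{M}R=\{U\mid R^\downarrow R^\uparrow U=U\}$, $\mathcal{K}R=\{U\mid R^\forall R^\exists U=U\}$. For $X'\subseteq X$, $Y'\subseteq Y$, $R_{X',Y'}=R\cap(X'\times Y')$. $(X',Y',R_{X',Y'})$ is a reduct of $(X,Y,R)$ in FCA if the map $\mathcal{M}R_{X',Y'}\to\mathcal{M}R$, $U'\mapsto R^\downarrow R^\uparrow U'$, is an order isomorphism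 (with respect to inclusion); it is a reduct in RST if the map $\mathcal{K}R_{X',Y'}\to\mathcal{K}R$, $U'\mapsto R^\forall R^\exists U'$, is an order isomorphism. *)

theory Defs
  imports Complex_Main
begin

text \<open>A crisp context is a triple (X, Y, R) with R a relation between elements of the
  carrier X and the carrier Y; we represent it by the carriers X, Y and a relation
  R :: 'a \<Rightarrow> 'b \<Rightarrow> bool (only its values on X \<times> Y matter).\<close>

definition ctx_up :: "'a set \<Rightarrow> 'b set \<Rightarrow> ('a \<Rightarrow> 'b \<Rightarrow> bool) \<Rightarrow> 'a set \<Rightarrow> 'b set" where
  "ctx_up X Y R U = {y \<in> Y. \<forall>x\<in>U. R x y}"

definition ctx_down :: "'a set \<Rightarrow> 'b set \<Rightarrow> ('a \<Rightarrow> 'b \<Rightarrow> bool) \<Rightarrow> 'b set \<Rightarrow> 'a set" where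
  "ctx_down X Y R V = {x \<in> X. \<forall>y\<in>V. R x y}"

definition ctx_ex :: "'a set \<Rightarrow> 'b set \<Rightarrow> ('a \<Rightarrow> 'b \<Rightarrow> bool) \<Rightarrow> 'a set \<Rightarrow> 'b set" where
  "ctx_ex X Y R U = {y \<in> Y. \<exists>x\<in>U. R x y}"

definition ctx_all :: "'a set \<Rightarrow> 'b set \<Rightarrow> ('a \<Rightarrow> 'b \<Rightarrow> bool) \<Rightarrow> 'b set \<Rightarrow> 'a set" where
  "ctx_all X Y R V = {x \<in> X. \<forall>y\<in>Y. R x y \<longrightarrow> y \<in> V}"

definition ctx_M :: "'a set \<Rightarrow> 'b set \<Rightarrow> ('a \<Rightarrow> 'b \<Rightarrow> bool) \<Rightarrow> 'a set set" where
  "ctx_M X Y R = {U. U \<subseteq> X \<and> ctx_down X Y R (ctx_up X Y R U) = U}"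

definition ctx_K :: "'a set \<Rightarrow> 'b set \<Rightarrow> ('a \<Rightarrow> 'b \<Rightarrow> bool) \<Rightarrow> 'a set set" where
  "ctx_K X Y R = {U. U \<subseteq> X \<and> ctx_all X Y R (ctx_ex X Y R U) = U}"

definition order_iso_on :: "('a set \<Rightarrow> 'b set) \<Rightarrow> 'a set set \<Rightarrow> 'b set set \<Rightarrow> bool" where
  "order_iso_on f S T \<longleftrightarrow> bij_betw f S T \<and> (\<forall>U\<in>S. \<forall>V\<in>S. U \<subseteq> V \<longleftrightarrow> f U \<subseteq> f V)"

text \<open>(X', Y', R restricted) is a reduct of (X, Y, R) in FCA. The restriction of R to
  X' \<times> Y' is represented by the same relation R with carriers X', Y'.\<close>
definition reduct_FCA ::
  "'a set \<Rightarrow> 'b set \<Rightarrow> 'a set \<Rightarrow> 'b set \<Rightarrow> ('a \<Rightarrow> 'b \<Rightarrow> bool) \<Rightarrow> bool" where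
  "reduct_FCA X' Y' X Y R \<longleftrightarrow>
     X' \<subseteq> X \<and> Y' \<subseteq> Y \<and>
     order_iso_on (\<lambda>U'. ctx_down X Y R (ctx_up X Y R U')) (ctx_M X' Y' R) (ctx_M X Y R)"

definition reduct_RST ::
  "'a set \<Rightarrow> 'b set \<Rightarrow> 'a set \<Rightarrow> 'b set \<Rightarrow> ('a \<Rightarrow> 'b \<Rightarrow> bool) \<Rightarrow> bool" where
  "reduct_RST X' Y' X Y R \<longleftrightarrow>
     X' \<subseteq> X \<and> Y' \<subseteq> Y \<and>
     order_iso_on (\<lambda>U'. ctx_all X Y R (ctx_ex X Y R U')) (ctx_K X' Y' R) (ctx_K X Y R)"

definition dense_rat :: "rat set \<Rightarrow> bool" where
  "dense_rat A \<longleftrightarrow> (\<forall>a b. a < b \<longrightarrow> (\<exists>x\<in>A. a < x \<and> x < b))"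

end

theory Submission
  imports Defs
begin

lemma downup_eq:
  "ctx_down X Y (\<lambda>a b. (a::'a::linorder) \<le> b) (ctx_up X Y (\<lambda>a b. a \<le> b) U)
   = {x\<in>X. \<forall>y\<in>Y. (\<forall>u\<in>U. u \<le> y) \<longrightarrow> x \<le> y}"
  unfolding ctx_down_def ctx_up_def by auto

lemma allex_eq:
  "ctx_all X Y (\<lambda>a b. \<not> (a::'a::linorder) \<le> b) (ctx_ex X Y (\<lambda>a b. \<not> a \<le> b) U)
   = {x\<in>X. \<forall>y\<in>Y. (\<forall>u\<in>U. u \<le> y) \<longrightarrow> x \<le> y}"
  unfolding ctx_all_def ctx_ex_def by auto

lemma FCA_RST:
  "reduct_FCA A B X Y (\<lambda>a b. (a::'a::linorder) \<le> b) = reduct_RST A B X Y (\<lambda>a b. \<not> a \<le> b)"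
proof -
  have "ctx_M A' B' (\<lambda>a b. (a::'a::linorder) \<le> b) = ctx_K A' B' (\<lambda>a b. \<not> a \<le> b)" for A' B'
    unfolding ctx_M_def ctx_K_def downup_eq allex_eq ..
  moreover have "(\<lambda>U'. ctx_down X Y (\<lambda>a b. (a::'a::linorder) \<le> b) (ctx_up X Y (\<lambda>a b. a \<le> b) U'))
     = (\<lambda>U'. ctx_all X Y (\<lambda>a b. \<not> a \<le> b) (ctx_ex X Y (\<lambda>a b. \<not> a \<le> b) U'))"
    unfolding downup_eq allex_eq ..
  ultimately show ?thesis unfolding reduct_FCA_def reduct_RST_def by simp
qed

lemma key:
  fixes A B :: "rat set"
  defines "phi \<equiv> \<lambda>U. {x::rat. \<forall>y. (\<forall>u\<in>U. u \<le> y) \<longrightarrow> x \<le> y}"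
    and "MAB \<equiv> {U. U \<subseteq> A \<and> {x\<in>A. \<forall>y\<in>B. (\<forall>u\<in>U. u \<le> y) \<longrightarrow> x \<le> y} = U}"
    and "MQ \<equiv> {U. {x::rat. \<forall>y. (\<forall>u\<in>U. u \<le> y) \<longrightarrow> x \<le> y} = U}"
  shows "order_iso_on phi MAB MQ \<longleftrightarrow> dense_rat A \<and> dense_rat B"
proof -
  have MQeq: "MQ = {U. phi U = U}" unfolding MQ_def phi_def by simp
  have ext: "U \<subseteq> phi U" for U unfolding phi_def by auto
  have mono: "U \<subseteq> V \<Longrightarrow> phi U \<subseteq> phi V" for U V unfolding phi_def by auto
  have idem: "phi (phi U) = phi U" for U
  proof
    show "phi U \<subseteq> phi (phi U)" by (rule ext)
    show "phi (phi U) \<subseteq> phi U"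
    proof
      fix x assume x: "x \<in> phi (phi U)"
      show "x \<in> phi U" unfolding phi_def
      proof (intro CollectI allI impI)
        fix y assume y: "\<forall>u\<in>U. u \<le> y"
        have "\<forall>z\<in>phi U. z \<le> y" using y unfolding phi_def by auto
        then show "x \<le> y" using x unfolding phi_def by auto
      qed
    qed
  qed
  have down: "x \<in> phi U \<Longrightarrow> x' \<le> x \<Longrightarrow> x' \<in> phi U" for x x' U
    unfolding phi_def by auto
  have MAB_ext: "U \<in> MAB \<Longrightarrow> U \<subseteq> A" for U unfolding MAB_def by auto
  have refl: "U \<subseteq> V" if U: "U \<in> MAB" and V: "V \<in> MAB" and s: "phi U \<subseteq> phi V" for U V
  proof
    fix u assume u: "u \<in> U"
    have uA: "u \<in> A" using u U unfolding MAB_def by auto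
    have "u \<in> {x\<in>A. \<forall>y\<in>B. (\<forall>v\<in>V. v \<le> y) \<longrightarrow> x \<le> y}"
    proof (intro CollectI conjI ballI impI uA)
      fix b assume "b \<in> B" and b: "\<forall>v\<in>V. v \<le> b"
      have "u \<in> phi V" using u ext s by blast
      then show "u \<le> b" using b unfolding phi_def by auto
    qed
    then show "u \<in> V" using V unfolding MAB_def by auto
  qed
  show ?thesis
  proof
    assume iso: "order_iso_on phi MAB MQ"
    have surj: "phi ` MAB = MQ" using iso unfolding order_iso_on_def bij_betw_def by auto
    have phiM: "phi {m} \<in> MQ" for m unfolding MQeq using idem by auto
    have inphi: "m \<in> phi {m}" for m using ext by auto
    have le: "x \<in> phi {m} \<Longrightarrow> x \<le> m" for x m unfolding phi_def by auto
    have dA: "dense_rat A" unfolding dense_rat_def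
    proof (intro allI impI)
      fix p q :: rat assume pq: "p < q"
      show "\<exists>x\<in>A. p < x \<and> x < q"
      proof (rule ccontr)
        assume na: "\<not> ?thesis"
        obtain m where m: "p < m" "m < q" using pq dense by blast
        obtain U where U: "U \<in> MAB" "phi U = phi {m}" using surj phiM by (metis imageE)
        have "\<forall>u\<in>U. u \<le> p"
        proof
          fix u assume u: "u \<in> U"
          then have "u \<le> m" using ext U(2) le by blast
          moreover have "u \<in> A" using u MAB_ext U(1) by blast
          ultimately show "u \<le> p" using na m by force
        qed
        moreover have "m \<in> phi U" using U(2) inphi by simp
        ultimately have "m \<le> p" unfolding phi_def by auto
        then show False using m by simp
      qed
    qed
    have dB: "dense_rat B" unfolding dense_rat_def
    proof (intro allI impI)
      fix p q :: rat assume pq: "p < q"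
      show "\<exists>x\<in>B. p < x \<and> x < q"
      proof (rule ccontr)
        assume nb: "\<not> ?thesis"
        obtain m1 where m1: "p < m1" "m1 < q" using pq dense by blast
        obtain m2 where m2: "m1 < m2" "m2 < q" using m1 dense by blast
        obtain U1 where U1: "U1 \<in> MAB" "phi U1 = phi {m1}" using surj phiM by (metis imageE)
        obtain U2 where U2: "U2 \<in> MAB" "phi U2 = phi {m2}" using surj phiM by (metis imageE)
        have "U2 \<subseteq> U1"
        proof
          fix u assume u: "u \<in> U2"
          have uA: "u \<in> A" using u MAB_ext U2(1) by blast
          have um: "u \<le> m2" using u ext U2(2) le by blast
          have "u \<in> {x\<in>A. \<forall>y\<in>B. (\<forall>v\<in>U1. v \<le> y) \<longrightarrow> x \<le> y}"
          proof (intro CollectI conjI ballI impI uA)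
            fix b assume bB: "b \<in> B" and b: "\<forall>v\<in>U1. v \<le> b"
            have "m1 \<in> phi U1" using U1(2) inphi by simp
            then have "m1 \<le> b" using b unfolding phi_def by auto
            then have "q \<le> b" using nb bB m1 by force
            then show "u \<le> b" using um m2 by simp
          qed
          then show "u \<in> U1" using U1(1) unfolding MAB_def by auto
        qed
        then have "phi {m2} \<subseteq> phi {m1}" using mono U1 U2 by metis
        then have "m2 \<le> m1" using inphi le by blast
        then show False using m2 by simp
      qed
    qed
    show "dense_rat A \<and> dense_rat B" using dA dB by simp
  next
    assume "dense_rat A \<and> dense_rat B"
    then have dA: "\<And>p q. p < q \<Longrightarrow> \<exists>x\<in>A. p < x \<and> x < q"
      and dB: "\<And>p q. p < q \<Longrightarrow> \<exists>x\<in>B. p < x \<and> x < q"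
      unfolding dense_rat_def by auto
    have into: "phi U \<in> MQ" for U unfolding MQeq using idem by auto
    have surj: "A \<inter> W \<in> MAB \<and> phi (A \<inter> W) = W" if W: "W \<in> MQ" for W
    proof
      have Wd: "x \<in> W \<Longrightarrow> x' \<le> x \<Longrightarrow> x' \<in> W" for x x'
        using W down unfolding MQeq by blast
      have Wc: "x \<in> W" if "\<forall>y. (\<forall>w\<in>W. w \<le> y) \<longrightarrow> x \<le> y" for x
        using W that unfolding MQeq phi_def by auto
      have "{x\<in>A. \<forall>y\<in>B. (\<forall>u\<in>A \<inter> W. u \<le> y) \<longrightarrow> x \<le> y} = A \<inter> W"
      proof
        show "A \<inter> W \<subseteq> {x\<in>A. \<forall>y\<in>B. (\<forall>u\<in>A \<inter> W. u \<le> y) \<longrightarrow> x \<le> y}" by auto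
        show "{x\<in>A. \<forall>y\<in>B. (\<forall>u\<in>A \<inter> W. u \<le> y) \<longrightarrow> x \<le> y} \<subseteq> A \<inter> W"
        proof
          fix a assume a: "a \<in> {x\<in>A. \<forall>y\<in>B. (\<forall>u\<in>A \<inter> W. u \<le> y) \<longrightarrow> x \<le> y}"
          have ubW: "\<forall>w\<in>W. w \<le> b" if bB: "b \<in> B" and b: "\<forall>u\<in>A \<inter> W. u \<le> b" for b
          proof
            fix w assume w: "w \<in> W"
            show "w \<le> b"
            proof (rule ccontr)
              assume "\<not> w \<le> b"
              then have "b < w" by simp
              then obtain a' where "a' \<in> A" "b < a'" "a' < w" using dA by blast
              then show False using b Wd[OF w] by force
            qed
          qed
          have "a \<in> W"
          proof (rule Wc, intro allI impI)
            fix y assume y: "\<forall>w\<in>W. w \<le> y"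
            show "a \<le> y"
            proof (rule ccontr)
              assume "\<not> a \<le> y"
              then have "y < a" by simp
              then obtain b where b: "b \<in> B" "y < b" "b < a" using dB by blast
              have "\<forall>u\<in>A \<inter> W. u \<le> b" using y b by force
              then have "a \<le> b" using a b by auto
              then show False using b by simp
            qed
          qed
          then show "a \<in> A \<inter> W" using a by auto
        qed
      qed
      then show "A \<inter> W \<in> MAB" unfolding MAB_def by auto
      show "phi (A \<inter> W) = W"
      proof
        show "phi (A \<inter> W) \<subseteq> W" using mono[of "A \<inter> W" W] W unfolding MQeq by auto
        show "W \<subseteq> phi (A \<inter> W)"
        proof
          fix x assume x: "x \<in> W"
          show "x \<in> phi (A \<inter> W)" unfolding phi_def
          proof (intro CollectI allI impI)
            fix y assume y: "\<forall>u\<in>A \<inter> W. u \<le> y"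
            show "x \<le> y"
            proof (rule ccontr)
              assume "\<not> x \<le> y"
              then have "y < x" by simp
              then obtain a where "a \<in> A" "y < a" "a < x" using dA by blast
              then show False using y Wd[OF x] by force
            qed
          qed
        qed
      qed
    qed
    have inj: "inj_on phi MAB"
      by (rule inj_onI) (metis refl subset_antisym order_refl)
    have img: "phi ` MAB = MQ"
    proof
      show "phi ` MAB \<subseteq> MQ" using into by auto
      show "MQ \<subseteq> phi ` MAB"
      proof
        fix W assume "W \<in> MQ"
        then have "A \<inter> W \<in> MAB" "phi (A \<inter> W) = W" using surj by auto
        then show "W \<in> phi ` MAB" by (metis imageI)
      qed
    qed
    show "order_iso_on phi MAB MQ" unfolding order_iso_on_def bij_betw_def
      using inj img refl mono by blast
  qed
qed

theorem mainTheorem9: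
  fixes A B :: "rat set"
  shows "(reduct_FCA A B UNIV UNIV (\<lambda>a b. a \<le> b) \<longleftrightarrow>
          reduct_RST A B UNIV UNIV (\<lambda>a b. \<not> a \<le> b)) \<and>
         (reduct_RST A B UNIV UNIV (\<lambda>a b. \<not> a \<le> b) \<longleftrightarrow>
          dense_rat A \<and> dense_rat B)"
proof -
  have e: "reduct_FCA A B UNIV UNIV (\<lambda>a b. a \<le> b) \<longleftrightarrow> dense_rat A \<and> dense_rat B"
    unfolding reduct_FCA_def ctx_M_def downup_eq
    using key[of A B] by simp
  show ?thesis using e FCA_RST[of A B UNIV UNIV] by simp
qed

end
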